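(* Let $G$ be a group acting on a set $X$. Let $A$ be a nonempty finite subset of $G$ and $Y$ a finite subset of $X$, and suppose $|A\cdot Y|\leq\alpha|A|$ for some $\alpha\in\mathbb{R}_{\geq0}$. Then there exists a nonempty subset $B\subset A$ such that $|CB\cdot Y|\leq\alpha|CB|$ for every finite subset $C$ of $G$.
   Context: $CB=\{cb\mid c\in C,b\in B\}$ and $S\cdot Y=\{s\cdot y\mid s\in S,y\in Y\}$. *)

theory Defs
  imports "HOL-Algebra.Group_Action" Complex_Main
begin

definition act_set :: "('a \<Rightarrow> 'b \<Rightarrow> 'b) \<Rightarrow> 'a set \<Rightarrow> 'b set \<Rightarrow> 'b set"
  where "act_set \<phi> S Y = {\<phi> s y | s y. s \<in> S \<and> y \<in> Y}"

end

theory Submission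
  imports Defs
begin

lemma act_set_img: "act_set \<phi> S Y = (\<lambda>(s,y). \<phi> s y) ` (S \<times> Y)"
  unfolding act_set_def by auto

lemma act_set_finite: "finite S \<Longrightarrow> finite Y \<Longrightarrow> finite (act_set \<phi> S Y)"
  unfolding act_set_img by auto

lemma act_set_mono: "S \<subseteq> T \<Longrightarrow> act_set \<phi> S Y \<subseteq> act_set \<phi> T Y"
  unfolding act_set_def by blast

lemma act_set_empty[simp]: "act_set \<phi> {} Y = {}"
  unfolding act_set_def by blast

lemma set_mult_img: "set_mult G C B = (\<lambda>(c,b). c \<otimes>\<^bsub>G\<^esub> b) ` (C \<times> B)"
  unfolding set_mult_def by auto

lemma set_mult_finite: "finite C \<Longrightarrow> finite B \<Longrightarrow> finite (set_mult G C B)"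
  unfolding set_mult_img by auto

lemma key:
  fixes G (structure)
  assumes ga: "group_action G X \<phi>" and B: "B \<subseteq> carrier G" "finite B" "B \<noteq> {}"
    and Y: "Y \<subseteq> X" "finite Y"
    and KB: "real (card (act_set \<phi> B Y)) = K * real (card B)"
    and min: "\<And>Z. Z \<subseteq> B \<Longrightarrow> Z \<noteq> {} \<Longrightarrow> K * real (card Z) \<le> real (card (act_set \<phi> Z Y))"
    and K: "K \<ge> 0"
    and C: "finite C" "C \<subseteq> carrier G"
  shows "real (card (act_set \<phi> (C <#> B) Y)) \<le> K * real (card (C <#> B))"
  using C
proof (induction C rule: finite_induct)
  case empty
  then show ?case by (simp add: set_mult_def)
next
  case (insert c C)
  interpret group_action G X \<phi> by (rule ga)
  have grp: "group G" using ga unfolding group_action_def group_hom_def by auto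
  have c: "c \<in> carrier G" and CG: "C \<subseteq> carrier G" using insert by auto
  have IH: "real (card (act_set \<phi> (C <#> B) Y)) \<le> K * real (card (C <#> B))"
    using insert CG by auto
  define Z where "Z = {x\<in>B. c \<otimes> x \<in> C <#> B}"
  have ZB: "Z \<subseteq> B" unfolding Z_def by auto
  have fZ: "finite Z" using ZB B finite_subset by blast
  have fCB: "finite (C <#> B)" using set_mult_finite insert B by blast
  have split: "insert c C <#> B = (C <#> B) \<union> (\<lambda>x. c \<otimes> x) ` B"
    unfolding set_mult_def by auto
  have sub2: "(C <#> B) \<union> (\<lambda>x. c \<otimes> x) ` (B - Z) = insert c C <#> B"
    unfolding split Z_def by auto
  have disj: "(C <#> B) \<inter> (\<lambda>x. c \<otimes> x) ` (B - Z) = {}"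
    unfolding Z_def by auto
  have inj: "inj_on (\<lambda>x. c \<otimes> x) B"
  proof (rule inj_onI)
    fix x y assume "x \<in> B" "y \<in> B" "c \<otimes> x = c \<otimes> y"
    moreover have "c \<in> Units G" using group.Units_eq[OF grp] c by simp
    moreover have "x \<in> carrier G" "y \<in> carrier G" using B(1) \<open>x \<in> B\<close> \<open>y \<in> B\<close> by auto
    ultimately show "x = y" using monoid.Units_l_cancel[OF group.is_monoid[OF grp], of c x y]
      by simp
  qed
  have cardB: "card ((\<lambda>x. c \<otimes> x) ` (B - Z)) = card B - card Z"
    using card_image[OF inj_on_subset[OF inj]] card_Diff_subset[OF fZ ZB] by auto
  have cardC': "card (insert c C <#> B) = card (C <#> B) + (card B - card Z)"
    using card_Un_disjoint[OF fCB _ disj] B(2) cardB sub2 by auto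
  have ZBle: "card Z \<le> card B" using card_mono[OF B(2) ZB] .
  have actc: "act_set \<phi> ((\<lambda>x. c \<otimes> x) ` B) Y = \<phi> c ` act_set \<phi> B Y"
  proof -
    have "\<phi> (c \<otimes> b) y = \<phi> c (\<phi> b y)" if "b \<in> B" "y \<in> Y" for b y
    proof -
      have "y \<in> X" "b \<in> carrier G" using that B(1) Y(1) by auto
      then show ?thesis using composition_rule[of y c b] c by blast
    qed
    note cr = this
    show ?thesis
    proof (rule equalityI; rule subsetI)
      fix w assume "w \<in> act_set \<phi> ((\<lambda>x. c \<otimes> x) ` B) Y"
      then obtain b y where "b \<in> B" "y \<in> Y" "w = \<phi> (c \<otimes> b) y" unfolding act_set_def by blast
      then show "w \<in> \<phi> c ` act_set \<phi> B Y" using cr unfolding act_set_def by blast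
    next
      fix w assume "w \<in> \<phi> c ` act_set \<phi> B Y"
      then obtain b y where "b \<in> B" "y \<in> Y" "w = \<phi> c (\<phi> b y)" unfolding act_set_def by blast
      then have "w = \<phi> (c \<otimes> b) y" "c \<otimes> b \<in> (\<lambda>x. c \<otimes> x) ` B" using cr[of b y] by auto
      then show "w \<in> act_set \<phi> ((\<lambda>x. c \<otimes> x) ` B) Y" using \<open>y \<in> Y\<close> unfolding act_set_def by blast
    qed
  qed
  have actZ: "\<phi> c ` act_set \<phi> Z Y \<subseteq> act_set \<phi> (C <#> B) Y"
  proof
    fix w assume "w \<in> \<phi> c ` act_set \<phi> Z Y"
    then obtain z y where zy: "z \<in> Z" "y \<in> Y" "w = \<phi> c (\<phi> z y)" unfolding act_set_def by auto
    have "\<phi> (c \<otimes> z) y = \<phi> c (\<phi> z y)"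
    proof -
      have "y \<in> X" "z \<in> carrier G" using zy ZB B(1) Y(1) by auto
      then show ?thesis using composition_rule[of y c z] c by blast
    qed
    moreover have "c \<otimes> z \<in> C <#> B" using zy Z_def by auto
    moreover have "\<phi> (c \<otimes> z) y \<in> act_set \<phi> (C <#> B) Y"
      using \<open>c \<otimes> z \<in> C <#> B\<close> zy(2) unfolding act_set_def by blast
    ultimately show "w \<in> act_set \<phi> (C <#> B) Y" using zy(3) by simp
  qed
  have actsub: "act_set \<phi> (insert c C <#> B) Y \<subseteq>
      act_set \<phi> (C <#> B) Y \<union> \<phi> c ` (act_set \<phi> B Y - act_set \<phi> Z Y)"
  proof -
    have "act_set \<phi> (insert c C <#> B) Y = act_set \<phi> (C <#> B) Y \<union> act_set \<phi> ((\<lambda>x. c \<otimes> x) ` B) Y"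
      unfolding split act_set_def by blast
    then show ?thesis using actc actZ by blast
  qed
  have fBY: "finite (act_set \<phi> B Y)" using act_set_finite B Y by blast
  have fCBY: "finite (act_set \<phi> (C <#> B) Y)" using act_set_finite fCB Y by blast
  have ZYsub: "act_set \<phi> Z Y \<subseteq> act_set \<phi> B Y" using act_set_mono[OF ZB] .
  have "card (act_set \<phi> (insert c C <#> B) Y) \<le>
      card (act_set \<phi> (C <#> B) Y \<union> \<phi> c ` (act_set \<phi> B Y - act_set \<phi> Z Y))"
    using card_mono[OF _ actsub] fCBY fBY by blast
  also have "\<dots> \<le> card (act_set \<phi> (C <#> B) Y) + card (\<phi> c ` (act_set \<phi> B Y - act_set \<phi> Z Y))"
    by (rule card_Un_le)
  also have "\<dots> \<le> card (act_set \<phi> (C <#> B) Y) + card (act_set \<phi> B Y - act_set \<phi> Z Y)"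
    using card_image_le fBY by auto
  also have "\<dots> = card (act_set \<phi> (C <#> B) Y) + (card (act_set \<phi> B Y) - card (act_set \<phi> Z Y))"
    using card_Diff_subset[OF finite_subset[OF ZYsub fBY] ZYsub] by simp
  finally have le1: "card (act_set \<phi> (insert c C <#> B) Y) \<le>
      card (act_set \<phi> (C <#> B) Y) + (card (act_set \<phi> B Y) - card (act_set \<phi> Z Y))" .
  have ZYle: "card (act_set \<phi> Z Y) \<le> card (act_set \<phi> B Y)" using card_mono[OF fBY ZYsub] .
  have KZ: "K * real (card Z) \<le> real (card (act_set \<phi> Z Y))"
    using min[OF ZB] by (cases "Z = {}") auto
  have "real (card (act_set \<phi> (insert c C <#> B) Y)) \<le>
      real (card (act_set \<phi> (C <#> B) Y)) + real (card (act_set \<phi> B Y)) - real (card (act_set \<phi> Z Y))"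
    using le1 ZYle by linarith
  also have "\<dots> \<le> K * real (card (C <#> B)) + K * real (card B) - K * real (card Z)"
    using IH KB KZ by linarith
  also have "\<dots> = K * real (card (insert c C <#> B))"
    using cardC' ZBle by (simp add: algebra_simps of_nat_diff)
  finally show ?case .
qed

theorem mainTheorem10:
  fixes G (structure) and X :: "'b set" and \<phi> :: "'a \<Rightarrow> 'b \<Rightarrow> 'b"
    and A :: "'a set" and Y :: "'b set" and \<alpha> :: real
  assumes "group_action G X \<phi>"
    and "A \<subseteq> carrier G" and "A \<noteq> {}" and "finite A"
    and "Y \<subseteq> X" and "finite Y"
    and "\<alpha> \<ge> 0"
    and "real (card (act_set \<phi> A Y)) \<le> \<alpha> * real (card A)"
  shows "\<exists>B. B \<subseteq> A \<and> B \<noteq> {} \<and>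
           (\<forall>C. C \<subseteq> carrier G \<and> finite C \<longrightarrow>
              real (card (act_set \<phi> (C <#> B) Y)) \<le> \<alpha> * real (card (C <#> B)))"
proof -
  define S where "S = {B. B \<subseteq> A \<and> B \<noteq> {}}"
  define f where "f B = real (card (act_set \<phi> B Y)) / real (card B)" for B
  have fS: "finite S" unfolding S_def using assms(4) by simp
  have AS: "A \<in> S" unfolding S_def using assms by auto
  define K where "K = Min (f ` S)"
  have "K \<in> f ` S" unfolding K_def using fS AS by (intro Min_in) auto
  then obtain B where BS: "B \<in> S" and KB: "f B = K" by auto
  have Kmin: "K \<le> f Z" if "Z \<in> S" for Z unfolding K_def using fS that by auto
  have B: "B \<subseteq> A" "B \<noteq> {}" using BS S_def by auto
  have fB: "finite B" using B assms(4) finite_subset by blast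
  have cB: "card B > 0" using fB B by (simp add: card_gt_0_iff)
  have K0: "K \<ge> 0" using KB f_def by auto
  have Ka: "K \<le> \<alpha>"
  proof -
    have "K \<le> f A" using Kmin AS .
    also have "f A \<le> \<alpha>" unfolding f_def using assms(8) assms(3,4)
      by (simp add: divide_le_eq card_gt_0_iff)
    finally show ?thesis .
  qed
  have KBeq: "real (card (act_set \<phi> B Y)) = K * real (card B)"
    using KB cB unfolding f_def by (simp add: field_simps)
  have mn: "K * real (card Z) \<le> real (card (act_set \<phi> Z Y))" if "Z \<subseteq> B" "Z \<noteq> {}" for Z
  proof -
    have ZS: "Z \<in> S" using that B S_def by auto
    have "card Z > 0" using that fB finite_subset by (auto simp: card_gt_0_iff)
    then show ?thesis using Kmin[OF ZS] unfolding f_def by (simp add: le_divide_eq)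
  qed
  show ?thesis
  proof (intro exI conjI allI impI)
    show "B \<subseteq> A" "B \<noteq> {}" using B by auto
    fix C assume C: "C \<subseteq> carrier G \<and> finite C"
    have "real (card (act_set \<phi> (C <#> B) Y)) \<le> K * real (card (C <#> B))"
      using key[OF assms(1) _ fB B(2) assms(5,6) KBeq mn K0] C B assms(2) by blast
    also have "\<dots> \<le> \<alpha> * real (card (C <#> B))" using Ka by (simp add: mult_right_mono)
    finally show "real (card (act_set \<phi> (C <#> B) Y)) \<le> \<alpha> * real (card (C <#> B))" .
  qed
qed

end
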